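(* Let $G=(V,E)$ be a simple undirected graph. A vector $x\in\{0,1\}^{E^c}$ satisfies $$\sum_{f\in \textnormal{int}(C)} x_f-(|C|-3)\Big(\sum_{f\in F(C)}x_f-|F(C)|+1\Big)\ \ge 0$$ for every $C\in\mathcal{C}$ with $\textnormal{int}(C)\cap E=\emptyset$ if and only if $x\in X(G)$. Consequently the integer program of minimizing $\sum_{f\in E^c}x_f$ over such $x$ is a valid formulation of the minimum chordal completion problem: its optimal solutions are exactly the characteristic vectors of minimum-cardinality chordal completions of $G$.
   Context: $E^c=\binom{V}{2}\setminus E$. For an ordered list $C=(v_0,\ldots,v_{k-1})$ of distinct vertices of $V$: $V(C)=\{v_0,\ldots,v_{k-1}\}$, $|C|=k$, $\textnormal{ext}(C)=\{\{v_{k-1},v_0\}\}\cup\{\{v_{i-1},v_i\}:1\le i\le k-1\}$, $\textnormal{int}(C)=\binom{V(C)}{2}\setminus\textnormal{ext}(C)$, and $F(C)=\textnormal{ext}(C)\setminus E$. $\mathcal{C}$ is the family of all ordered lists of at least three distinct vertices of $V$. For $x\in\{0,1\}^{E^c}$, $E(x)=\{f\in E^c:x_f=1\}$, and $X(G)=\{x\in\{0,1\}^{E^c}: (V,E\cup E(x))\text{ is chordal}\}$, where a graph is chordal if every cycle with at least four vertices has a chord (an edge joining two nonconsecutive vertices of the cycle). A chordal completion of $G$ is a set $F\subseteq E^c$ with $(V,E\cup F)$ chordal. *)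

theory Defs
  imports Main
begin

definition binom2 :: "'a set \<Rightarrow> 'a set set" where
  "binom2 S = {e. e \<subseteq> S \<and> card e = 2}"

definition simple_graph :: "'a set \<Rightarrow> 'a set set \<Rightarrow> bool" where
  "simple_graph V E \<longleftrightarrow> finite V \<and> E \<subseteq> binom2 V"

definition Ecomp :: "'a set \<Rightarrow> 'a set set \<Rightarrow> 'a set set" where
  "Ecomp V E = binom2 V - E"

definition ext :: "'a list \<Rightarrow> 'a set set" where
  "ext C = {{C ! (length C - 1), C ! 0}} \<union> {{C ! (i - 1), C ! i} | i. 1 \<le> i \<and> i \<le> length C - 1}"

definition intr :: "'a list \<Rightarrow> 'a set set" where
  "intr C = binom2 (set C) - ext C"

definition Fc :: "'a set set \<Rightarrow> 'a list \<Rightarrow> 'a set set" where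
  "Fc E C = ext C - E"

definition calC :: "'a set \<Rightarrow> 'a list set" where
  "calC V = {C. distinct C \<and> set C \<subseteq> V \<and> length C \<ge> 3}"

definition is_cycle :: "'a set \<Rightarrow> 'a set set \<Rightarrow> 'a list \<Rightarrow> bool" where
  "is_cycle V E C \<longleftrightarrow> distinct C \<and> set C \<subseteq> V \<and> length C \<ge> 3 \<and> ext C \<subseteq> E"

definition has_chord :: "'a set set \<Rightarrow> 'a list \<Rightarrow> bool" where
  "has_chord E C \<longleftrightarrow> (\<exists>e\<in>E. e \<in> binom2 (set C) \<and> e \<notin> ext C)"

definition chordal :: "'a set \<Rightarrow> 'a set set \<Rightarrow> bool" where
  "chordal V E \<longleftrightarrow> (\<forall>C. is_cycle V E C \<and> length C \<ge> 4 \<longrightarrow> has_chord E C)"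

text \<open>0/1 vectors indexed by E^c (represented as functions vanishing outside E^c).\<close>

definition binvecs :: "'a set \<Rightarrow> 'a set set \<Rightarrow> ('a set \<Rightarrow> int) set" where
  "binvecs V E = {x. (\<forall>f\<in>Ecomp V E. x f \<in> {0, 1}) \<and> (\<forall>f. f \<notin> Ecomp V E \<longrightarrow> x f = 0)}"

definition Ex :: "'a set \<Rightarrow> 'a set set \<Rightarrow> ('a set \<Rightarrow> int) \<Rightarrow> 'a set set" where
  "Ex V E x = {f \<in> Ecomp V E. x f = 1}"

definition XG :: "'a set \<Rightarrow> 'a set set \<Rightarrow> ('a set \<Rightarrow> int) set" where
  "XG V E = {x \<in> binvecs V E. chordal V (E \<union> Ex V E x)}"

definition chordal_completion :: "'a set \<Rightarrow> 'a set set \<Rightarrow> 'a set set \<Rightarrow> bool" where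
  "chordal_completion V E F \<longleftrightarrow> F \<subseteq> Ecomp V E \<and> chordal V (E \<union> F)"

definition charvec :: "'a set set \<Rightarrow> 'a set \<Rightarrow> int" where
  "charvec F = (\<lambda>f. if f \<in> F then 1 else 0)"

definition cycle_ineq :: "'a set set \<Rightarrow> ('a set \<Rightarrow> int) \<Rightarrow> 'a list \<Rightarrow> bool" where
  "cycle_ineq E x C \<longleftrightarrow>
     (\<Sum>f\<in>intr C. x f) - (int (length C) - 3) * ((\<Sum>f\<in>Fc E C. x f) - int (card (Fc E C)) + 1) \<ge> 0"

definition feasible :: "'a set \<Rightarrow> 'a set set \<Rightarrow> ('a set \<Rightarrow> int) set" where
  "feasible V E = {x \<in> binvecs V E. \<forall>C\<in>calC V. intr C \<inter> E = {} \<longrightarrow> cycle_ineq E x C}"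

end

theory Submission
  imports Defs
begin

lemma binom2_finite: "finite S \<Longrightarrow> finite (binom2 S)"
  unfolding binom2_def by (rule finite_subset[of _ "Pow S"]) auto

lemma two_in_binom2: "a \<in> S \<Longrightarrow> b \<in> S \<Longrightarrow> a \<noteq> b \<Longrightarrow> {a,b} \<in> binom2 S"
  unfolding binom2_def by auto

lemma ext_sub: "distinct C \<Longrightarrow> length C \<ge> 3 \<Longrightarrow> ext C \<subseteq> binom2 (set C)"
proof
  fix e assume d: "distinct C" and l: "length C \<ge> 3" and "e \<in> ext C"
  then consider "e = {C ! (length C - 1), C ! 0}" | i where "e = {C ! (i - 1), C ! i}" "1 \<le> i" "i \<le> length C - 1"
    unfolding ext_def by auto
  then show "e \<in> binom2 (set C)"
  proof cases
    case 1
    have "C ! (length C - 1) \<noteq> C ! 0" using d l nth_eq_iff_index_eq[OF d, of "length C - 1" 0] by fastforce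
    then show ?thesis using 1 l by (auto intro!: two_in_binom2 nth_mem)
  next
    case 2 then show ?thesis using d l by (auto intro!: two_in_binom2 simp: nth_eq_iff_index_eq)
  qed
qed

lemma ext_card: "length C \<ge> 3 \<Longrightarrow> card (ext C) \<le> length C"
proof -
  assume "length C \<ge> 3"
  have "ext C = {{C ! (length C - 1), C ! 0}} \<union> (\<lambda>i. {C ! (i - 1), C ! i}) ` {1..length C - 1}"
    unfolding ext_def by auto
  then have "card (ext C) \<le> 1 + card ((\<lambda>i. {C ! (i - 1), C ! i}) ` {1..length C - 1})"
    using card_Un_le[of "{{C ! (length C - 1), C ! 0}}" "(\<lambda>i. {C ! (i - 1), C ! i}) ` {1..length C - 1}"] by simp
  also have "\<dots> \<le> 1 + card {1..length C - 1}" using card_image_le[of "{1..length C - 1}"] by simp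
  finally show ?thesis using \<open>length C \<ge> 3\<close> by simp
qed

lemma ext3: "distinct C \<Longrightarrow> length C = 3 \<Longrightarrow> card (ext C) = 3"
proof -
  assume d: "distinct C" and l: "length C = 3"
  have "ext C = {{C!2, C!0}, {C!0, C!1}, {C!1, C!2}}"
  proof -
    have "{{C ! (i - 1), C ! i} | i. 1 \<le> i \<and> i \<le> length C - 1} = {{C!0, C!1}, {C!1, C!2}}"
    proof (rule set_eqI, rule iffI)
      fix e assume "e \<in> {{C ! (i - 1), C ! i} | i. 1 \<le> i \<and> i \<le> length C - 1}"
      then obtain i where "e = {C ! (i - 1), C ! i}" "1 \<le> i" "i \<le> 2" using l by auto
      moreover have "i = 1 \<or> i = 2" using \<open>1 \<le> i\<close> \<open>i \<le> 2\<close> by auto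
      ultimately show "e \<in> {{C!0, C!1}, {C!1, C!2}}" by auto
    next
      fix e assume "e \<in> {{C!0, C!1}, {C!1, C!2}}"
      then have "e = {C ! (1 - 1), C ! 1} \<or> e = {C ! (2 - 1), C ! 2}" by auto
      moreover have "1 \<le> (1::nat) \<and> 1 \<le> length C - 1" "1 \<le> (2::nat) \<and> 2 \<le> length C - 1" using l by auto
      ultimately show "e \<in> {{C ! (i - 1), C ! i} | i. 1 \<le> i \<and> i \<le> length C - 1}" by blast
    qed
    then show ?thesis unfolding ext_def using l by (simp add: insert_commute)
  qed
  moreover have "C!0 \<noteq> C!1" "C!0 \<noteq> C!2" "C!1 \<noteq> C!2" using d l by (auto simp: nth_eq_iff_index_eq)
  ultimately show ?thesis by (auto simp: doubleton_eq_iff card_insert_if)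
qed

lemma ext_mem1: "1 \<le> t \<Longrightarrow> t \<le> length C - 1 \<Longrightarrow> {C!(t-1), C!t} \<in> ext C"
  unfolding ext_def by blast

lemma ext_mem0: "{C!(length C - 1), C!0} \<in> ext C"
  unfolding ext_def by blast

lemma split_chord:
  assumes d: "distinct C" and l: "length C \<ge> 4" and eb: "e \<in> binom2 (set C)" and ne: "e \<notin> ext C"
  obtains C1 C2 where "distinct C1" "distinct C2" "set C1 \<subseteq> set C" "set C2 \<subseteq> set C"
    "3 \<le> length C1" "3 \<le> length C2" "length C1 + length C2 = length C + 2"
    "ext C1 \<subseteq> ext C \<union> {e}" "ext C2 \<subseteq> ext C \<union> {e}" "set C1 \<inter> set C2 \<subseteq> e"
proof -
  define k where "k = length C"
  from eb obtain a b where ab: "e = {a,b}" "a \<in> set C" "b \<in> set C" "a \<noteq> b"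
    unfolding binom2_def by (auto simp: card_2_iff)
  then obtain p q where pq: "a = C!p" "b = C!q" "p < k" "q < k" unfolding k_def by (auto simp: in_set_conv_nth)
  have "p \<noteq> q" using pq ab by auto
  define i where "i = min p q"
  define j where "j = max p q"
  have ij: "i < j" "j < k" using \<open>p \<noteq> q\<close> pq unfolding i_def j_def by auto
  have e: "e = {C!i, C!j}" using ab pq unfolding i_def j_def by (auto simp: min_def max_def insert_commute)
  have j1: "j \<noteq> i + 1"
  proof
    assume "j = i + 1"
    then have "e = {C!(j-1), C!j}" using e by simp
    moreover have "1 \<le> j" "j \<le> length C - 1" using ij k_def \<open>j = i+1\<close> by auto
    ultimately show False using ne ext_mem1 by metis
  qed
  have j2: "\<not> (i = 0 \<and> j = k - 1)"
  proof
    assume "i = 0 \<and> j = k - 1"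
    then have "e = {C!(length C - 1), C!0}" using e k_def by (auto simp: insert_commute)
    then show False using ne ext_mem0 by metis
  qed
  define C1 where "C1 = drop i (take (j+1) C)"
  define C2 where "C2 = take (i+1) C @ drop j C"
  have lC1: "length C1 = j + 1 - i" using ij k_def C1_def by auto
  have lC2: "length C2 = i + 1 + (k - j)" using ij k_def C2_def by auto
  have n1: "C1 ! m = C ! (i + m)" if "m < j + 1 - i" for m
    using that ij k_def C1_def by auto
  have n2a: "C2 ! m = C ! m" if "m \<le> i" for m
    using that ij k_def C2_def by (auto simp: nth_append add.commute)
  have n2b: "C2 ! m = C ! (m - (i+1) + j)" if "i < m" "m < i + 1 + (k - j)" for m
    using that ij k_def C2_def by (auto simp: nth_append add.commute)
  show ?thesis
  proof
    show "distinct C1" using d C1_def by auto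
    show "distinct C2" using d C2_def ij set_take_disj_set_drop_if_distinct[OF d, of "i+1" j] by auto
    show "set C1 \<subseteq> set C" using C1_def by (meson in_set_dropD in_set_takeD subsetI)
    show "set C2 \<subseteq> set C" using C2_def by (auto dest: in_set_dropD in_set_takeD)
    show "3 \<le> length C1" using lC1 ij j1 by auto
    show "3 \<le> length C2" using lC2 ij j2 l k_def by auto
    show "length C1 + length C2 = length C + 2" using lC1 lC2 ij k_def by auto
    show "ext C1 \<subseteq> ext C \<union> {e}"
    proof
      fix f assume "f \<in> ext C1"
      then consider "f = {C1 ! (length C1 - 1), C1 ! 0}" | m where "f = {C1 ! (m - 1), C1 ! m}" "1 \<le> m" "m \<le> length C1 - 1"
        unfolding ext_def by auto
      then show "f \<in> ext C \<union> {e}"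
      proof cases
        case 1 then have "f = e" using n1[of 0] n1[of "j - i"] lC1 ij e by (auto simp: insert_commute)
        then show ?thesis by simp
      next
        case 2
        then have "f = {C!(i+m-1), C!(i+m)}" using n1[of m] n1[of "m-1"] lC1 by auto
        moreover have "1 \<le> i+m" "i + m \<le> length C - 1" using 2 lC1 ij k_def by auto
        ultimately show ?thesis using ext_mem1 by (metis UnI1)
      qed
    qed
    show "ext C2 \<subseteq> ext C \<union> {e}"
    proof
      fix f assume "f \<in> ext C2"
      then consider "f = {C2 ! (length C2 - 1), C2 ! 0}" | m where "f = {C2 ! (m - 1), C2 ! m}" "1 \<le> m" "m \<le> length C2 - 1"
        unfolding ext_def by auto
      then show "f \<in> ext C \<union> {e}"
      proof cases
        case 1
        have "C2 ! (length C2 - 1) = C ! (length C - 1)" using n2b[of "length C2 - 1"] lC2 ij k_def by auto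
        moreover have "C2 ! 0 = C ! 0" using n2a by auto
        ultimately show ?thesis using 1 ext_mem0 by auto
      next
        case 2
        consider "m \<le> i" | "m = i + 1" | "m > i + 1" by linarith
        then show ?thesis
        proof cases
          case 1
          then have "f = {C!(m-1), C!m}" using 2 n2a by auto
          moreover have "m \<le> length C - 1" using 1 ij k_def by auto
          ultimately show ?thesis using ext_mem1 2 by (metis UnI1)
        next
          case 2
          then have "f = e" using \<open>f = {C2 ! (m - 1), C2 ! m}\<close> n2a[of i] n2b[of "i+1"] ij lC2 e by auto
          then show ?thesis by simp
        next
          case 3
          then have "f = {C!(m - (i+1) + j - 1), C!(m - (i+1) + j)}" using 2 n2b[of m] n2b[of "m-1"] lC2 by auto
          moreover have "m - (i+1) + j - 1 = (m - (i+1) + j) - 1" by simp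
          moreover have "1 \<le> m - (i+1) + j" "m - (i+1) + j \<le> length C - 1" using 3 2 lC2 ij k_def by auto
          ultimately show ?thesis using ext_mem1 by (metis UnI1)
        qed
      qed
    qed
    show "set C1 \<inter> set C2 \<subseteq> e"
    proof
      fix x assume "x \<in> set C1 \<inter> set C2"
      then obtain m t where m: "m < length C1" "x = C1 ! m" and t: "t < length C2" "x = C2 ! t"
        by (auto simp: in_set_conv_nth)
      have xm: "x = C ! (i + m)" using m n1 lC1 by auto
      have "i + m < k" using m lC1 ij by auto
      obtain t' where t': "x = C ! t'" "t' < k" "t' \<le> i \<or> j \<le> t'"
      proof (cases "t \<le> i")
        case True then show ?thesis using that[of t] t n2a ij by auto
      next
        case False
        have "t - (i+1) + j < k" "j \<le> t - (i+1) + j" using False t lC2 ij by auto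
        moreover have "x = C ! (t - (i+1) + j)" using False t n2b lC2 by auto
        ultimately show ?thesis using that by blast
      qed
      have "i + m = t'" using xm t' \<open>i + m < k\<close> d k_def nth_eq_iff_index_eq by metis
      then have "t' = i \<or> t' = j" using t' m lC1 by auto
      then show "x \<in> e" using e t' by auto
    qed
  qed
qed

lemma binom2_inter: "S1 \<inter> S2 \<subseteq> e \<Longrightarrow> card e = 2 \<Longrightarrow> binom2 S1 \<inter> binom2 S2 \<subseteq> {e}"
proof
  fix f assume a: "S1 \<inter> S2 \<subseteq> e" "card e = 2" "f \<in> binom2 S1 \<inter> binom2 S2"
  then have "f \<subseteq> e" "card f = 2" unfolding binom2_def by auto
  moreover have "finite e" using a(2) card.infinite by fastforce
  ultimately have "f = e" using a(2) card_subset_eq by metis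
  then show "f \<in> {e}" by simp
qed

lemma many_chords:
  assumes ch: "chordal V H"
  shows "is_cycle V H C \<Longrightarrow> 2 * length C \<le> card (binom2 (set C) \<inter> H) + 3"
proof (induction "length C" arbitrary: C rule: less_induct)
  case less
  have d: "distinct C" and sV: "set C \<subseteq> V" and l3: "length C \<ge> 3" and eH: "ext C \<subseteq> H"
    using less.prems unfolding is_cycle_def by auto
  have fin: "finite (binom2 (set C) \<inter> H)" using binom2_finite by blast
  show ?case
  proof (cases "length C = 3")
    case True
    have "ext C \<subseteq> binom2 (set C) \<inter> H" using ext_sub[OF d l3] eH by auto
    then have "card (ext C) \<le> card (binom2 (set C) \<inter> H)" using fin card_mono by blast
    then show ?thesis using ext3[OF d True] True by simp
  next
    case False
    then have l4: "length C \<ge> 4" using l3 by simp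
    then obtain e where e: "e \<in> H" "e \<in> binom2 (set C)" "e \<notin> ext C"
      using ch less.prems unfolding chordal_def has_chord_def by blast
    obtain C1 C2 where c: "distinct C1" "distinct C2" "set C1 \<subseteq> set C" "set C2 \<subseteq> set C"
      "3 \<le> length C1" "3 \<le> length C2" "length C1 + length C2 = length C + 2"
      "ext C1 \<subseteq> ext C \<union> {e}" "ext C2 \<subseteq> ext C \<union> {e}" "set C1 \<inter> set C2 \<subseteq> e"
      using split_chord[OF d l4 e(2,3)] by blast
    have cy1: "is_cycle V H C1" using c sV eH e unfolding is_cycle_def by auto
    have cy2: "is_cycle V H C2" using c sV eH e unfolding is_cycle_def by auto
    have ih1: "2 * length C1 \<le> card (binom2 (set C1) \<inter> H) + 3"
      using less.hyps[OF _ cy1] c by auto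
    have ih2: "2 * length C2 \<le> card (binom2 (set C2) \<inter> H) + 3"
      using less.hyps[OF _ cy2] c by auto
    define A where "A = binom2 (set C1) \<inter> H"
    define B where "B = binom2 (set C2) \<inter> H"
    have mono: "binom2 S \<subseteq> binom2 T" if "S \<subseteq> T" for S T using that unfolding binom2_def by auto
    have AB: "A \<union> B \<subseteq> binom2 (set C) \<inter> H" using mono[OF c(3)] mono[OF c(4)] A_def B_def by auto
    have finA: "finite A" "finite B" using AB fin by (meson finite_subset le_sup_iff)+
    have "card e = 2" using e(2) unfolding binom2_def by auto
    then have "A \<inter> B \<subseteq> {e}" using binom2_inter[OF c(10)] A_def B_def by auto
    then have "card (A \<inter> B) \<le> card {e}" by (intro card_mono) auto
    then have "card (A \<inter> B) \<le> 1" by simp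
    moreover have "card (A \<union> B) + card (A \<inter> B) = card A + card B" using card_Un_Int finA by metis
    moreover have "card (A \<union> B) \<le> card (binom2 (set C) \<inter> H)" using AB fin card_mono by blast
    ultimately show ?thesis using ih1[folded A_def] ih2[folded B_def] c(7) by linarith
  qed
qed

lemma intr_chords:
  assumes ch: "chordal V H" and cy: "is_cycle V H C"
  shows "length C \<le> card (intr C \<inter> H) + 3"
proof -
  have d: "distinct C" and l3: "length C \<ge> 3" and eH: "ext C \<subseteq> H"
    using cy unfolding is_cycle_def by auto
  have fin: "finite (binom2 (set C) \<inter> H)" using binom2_finite by blast
  have sub: "ext C \<subseteq> binom2 (set C) \<inter> H" using ext_sub[OF d l3] eH by auto
  have eq: "intr C \<inter> H = (binom2 (set C) \<inter> H) - ext C" unfolding intr_def by auto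
  have "card (intr C \<inter> H) = card (binom2 (set C) \<inter> H) - card (ext C)"
    unfolding eq using card_Diff_subset[OF finite_subset[OF sub fin] sub] .
  moreover have "card (ext C) \<le> card (binom2 (set C) \<inter> H)" using card_mono[OF fin sub] .
  ultimately show ?thesis using many_chords[OF ch cy] ext_card[OF l3] by linarith
qed

lemma bv_range: "x \<in> binvecs V E \<Longrightarrow> 0 \<le> x f \<and> x f \<le> 1"
  unfolding binvecs_def by (cases "f \<in> Ecomp V E") auto

lemma part1:
  assumes sg: "simple_graph V E" and xb: "x \<in> binvecs V E"
  shows "(\<forall>C\<in>calC V. intr C \<inter> E = {} \<longrightarrow> cycle_ineq E x C) \<longleftrightarrow> x \<in> XG V E"
proof
  define H where "H = E \<union> Ex V E x"
  have inH: "f \<in> H \<longleftrightarrow> f \<in> E \<or> (f \<in> Ecomp V E \<and> x f = 1)" for f unfolding H_def Ex_def by auto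
  have x01: "f \<in> Ecomp V E \<Longrightarrow> x f = 0 \<or> x f = 1" for f using xb unfolding binvecs_def by auto
  have x0: "f \<notin> Ecomp V E \<Longrightarrow> x f = 0" for f using xb unfolding binvecs_def by auto
  have ecomp: "f \<in> binom2 V \<Longrightarrow> f \<notin> E \<Longrightarrow> f \<in> Ecomp V E" for f unfolding Ecomp_def by auto
  have b2mono: "set C \<subseteq> V \<Longrightarrow> binom2 (set C) \<subseteq> binom2 V" for C unfolding binom2_def by auto
  {
    assume ineq: "\<forall>C\<in>calC V. intr C \<inter> E = {} \<longrightarrow> cycle_ineq E x C"
    have "chordal V H" unfolding chordal_def
    proof (intro allI impI)
      fix C assume a: "is_cycle V H C \<and> 4 \<le> length C"
      show "has_chord H C"
      proof (rule ccontr)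
        assume nc: "\<not> has_chord H C"
        have d: "distinct C" and sV: "set C \<subseteq> V" and l3: "length C \<ge> 3" and eH: "ext C \<subseteq> H"
          using a unfolding is_cycle_def by auto
        have noH: "f \<in> intr C \<Longrightarrow> f \<notin> H" for f using nc unfolding has_chord_def intr_def by auto
        have iE: "intr C \<inter> E = {}" using noH inH by auto
        have cC: "C \<in> calC V" using d sV l3 unfolding calC_def by auto
        have ci: "cycle_ineq E x C" using ineq iE cC by auto
        have s1: "(\<Sum>f\<in>intr C. x f) = 0"
        proof (rule sum.neutral, rule ballI)
          fix f assume "f \<in> intr C"
          then have "f \<notin> H" using noH by auto
          then show "x f = 0" using x01 x0 inH by blast
        qed
        have s2: "(\<Sum>f\<in>Fc E C. x f) = (\<Sum>f\<in>Fc E C. 1)"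
        proof (rule sum.cong, simp)
          fix f assume "f \<in> Fc E C"
          then have "f \<in> H" "f \<notin> E" using eH unfolding Fc_def by auto
          then show "x f = 1" using inH by auto
        qed
        have "int (length C) - 3 > 0" using a by auto
        then show False using ci s1 s2 unfolding cycle_ineq_def by simp
      qed
    qed
    then show "x \<in> XG V E" using xb unfolding XG_def H_def by auto
  }
  {
    assume "x \<in> XG V E"
    then have ch: "chordal V H" unfolding XG_def H_def by auto
    show "\<forall>C\<in>calC V. intr C \<inter> E = {} \<longrightarrow> cycle_ineq E x C"
    proof (intro ballI impI)
      fix C assume cC: "C \<in> calC V" and iE: "intr C \<inter> E = {}"
      have d: "distinct C" and sV: "set C \<subseteq> V" and l3: "length C \<ge> 3" using cC unfolding calC_def by auto
      have extV: "ext C \<subseteq> binom2 V" using ext_sub[OF d l3] b2mono[OF sV] by auto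
      have FcE: "Fc E C \<subseteq> Ecomp V E" using extV ecomp unfolding Fc_def by auto
      have finFc: "finite (Fc E C)" using finite_subset[OF ext_sub[OF d l3] binom2_finite] unfolding Fc_def by auto
      have finI: "finite (intr C)" using binom2_finite unfolding intr_def by auto
      have s1nn: "(\<Sum>f\<in>intr C. x f) \<ge> 0" using bv_range[OF xb] by (simp add: sum_nonneg)
      show "cycle_ineq E x C"
      proof (cases "\<exists>f\<in>Fc E C. x f \<noteq> 1")
        case True
        then obtain g where g: "g \<in> Fc E C" "x g = 0" using x01 FcE by blast
        have "(\<Sum>f\<in>Fc E C. x f) = x g + (\<Sum>f\<in>Fc E C - {g}. x f)"
          using g finFc by (simp add: sum.remove)
        also have "(\<Sum>f\<in>Fc E C - {g}. x f) \<le> (\<Sum>f\<in>Fc E C - {g}. 1)"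
          using bv_range[OF xb] by (intro sum_mono) auto
        also have "(\<Sum>f\<in>Fc E C - {g}. (1::int)) = int (card (Fc E C)) - 1"
        proof -
          have "card (Fc E C) \<noteq> 0" using g finFc by auto
          then show ?thesis using card_Diff_singleton[OF g(1)] by simp
        qed
        finally have le: "(\<Sum>f\<in>Fc E C. x f) - int (card (Fc E C)) + 1 \<le> 0" using g by simp
        have "(int (length C) - 3) * ((\<Sum>f\<in>Fc E C. x f) - int (card (Fc E C)) + 1) \<le> 0"
          using l3 le by (intro mult_nonneg_nonpos) auto
        then show ?thesis unfolding cycle_ineq_def using s1nn by linarith
      next
        case False
        have s2: "(\<Sum>f\<in>Fc E C. x f) = (\<Sum>f\<in>Fc E C. 1)" using False by (intro sum.cong) auto
        have eH: "ext C \<subseteq> H"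
        proof
          fix f assume "f \<in> ext C"
          then show "f \<in> H" using False FcE inH unfolding Fc_def by blast
        qed
        have cy: "is_cycle V H C" using d sV l3 eH unfolding is_cycle_def by auto
        have ic: "length C \<le> card (intr C \<inter> H) + 3" using intr_chords[OF ch cy] .
        have "(\<Sum>f\<in>intr C \<inter> H. x f) = (\<Sum>f\<in>intr C \<inter> H. 1)"
          using iE inH by (intro sum.cong) auto
        then have "int (card (intr C \<inter> H)) = (\<Sum>f\<in>intr C \<inter> H. x f)" by simp
        also have "\<dots> \<le> (\<Sum>f\<in>intr C. x f)"
          using finI bv_range[OF xb] by (intro sum_mono2) auto
        finally show ?thesis unfolding cycle_ineq_def using s2 ic by simp
      qed
    qed
  }
qed

lemma cv_bv: "F \<subseteq> Ecomp V E \<Longrightarrow> charvec F \<in> binvecs V E"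
  unfolding binvecs_def charvec_def by auto

lemma Ex_cv: "F \<subseteq> Ecomp V E \<Longrightarrow> Ex V E (charvec F) = F"
  unfolding Ex_def charvec_def by auto

lemma cv_Ex: "x \<in> binvecs V E \<Longrightarrow> charvec (Ex V E x) = x"
  unfolding binvecs_def charvec_def Ex_def by (rule ext) auto

lemma Ex_sub: "Ex V E x \<subseteq> Ecomp V E" unfolding Ex_def by auto

lemma sum_cv: "finite A \<Longrightarrow> F \<subseteq> A \<Longrightarrow> (\<Sum>f\<in>A. charvec F f) = int (card F)"
proof -
  assume a: "finite A" "F \<subseteq> A"
  have "(\<Sum>f\<in>A. charvec F f) = (\<Sum>f\<in>A. if f \<in> F then 1 else 0)" unfolding charvec_def by simp
  also have "\<dots> = int (card (A \<inter> F))" using a(1) by (simp add: sum.If_cases)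
  also have "A \<inter> F = F" using a(2) by auto
  finally show ?thesis .
qed

theorem proposition1:
  fixes V :: "'a set" and E :: "'a set set"
  assumes "simple_graph V E"
  shows "(\<forall>x\<in>binvecs V E.
            (\<forall>C\<in>calC V. intr C \<inter> E = {} \<longrightarrow> cycle_ineq E x C) \<longleftrightarrow> x \<in> XG V E)
       \<and> (\<forall>x. (x \<in> feasible V E \<and>
                (\<forall>y\<in>feasible V E. (\<Sum>f\<in>Ecomp V E. x f) \<le> (\<Sum>f\<in>Ecomp V E. y f)))
             \<longleftrightarrow> (\<exists>F. chordal_completion V E F \<and>
                     (\<forall>F'. chordal_completion V E F' \<longrightarrow> card F \<le> card F') \<and>
                     x = charvec F))"
proof
  show P1: "\<forall>x\<in>binvecs V E.
            (\<forall>C\<in>calC V. intr C \<inter> E = {} \<longrightarrow> cycle_ineq E x C) \<longleftrightarrow> x \<in> XG V E"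
    using part1[OF assms] by blast
  have feas: "feasible V E = XG V E"
  proof (rule set_eqI)
    fix x show "x \<in> feasible V E \<longleftrightarrow> x \<in> XG V E"
    proof (cases "x \<in> binvecs V E")
      case True then show ?thesis using P1 unfolding feasible_def by auto
    next
      case False then show ?thesis unfolding feasible_def XG_def by auto
    qed
  qed
  have finE: "finite (Ecomp V E)" using assms binom2_finite unfolding simple_graph_def Ecomp_def by auto
  have XGcc: "x \<in> XG V E \<longleftrightarrow> (\<exists>F. chordal_completion V E F \<and> x = charvec F)" for x
  proof
    assume "x \<in> XG V E"
    then have "x \<in> binvecs V E" "chordal V (E \<union> Ex V E x)" unfolding XG_def by auto
    then have "chordal_completion V E (Ex V E x) \<and> x = charvec (Ex V E x)"
      using cv_Ex[of x V E] Ex_sub[of V E x] unfolding chordal_completion_def by simp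
    then show "\<exists>F. chordal_completion V E F \<and> x = charvec F" by blast
  next
    assume "\<exists>F. chordal_completion V E F \<and> x = charvec F"
    then obtain F where "chordal_completion V E F" "x = charvec F" by blast
    then have "F \<subseteq> Ecomp V E" "chordal V (E \<union> F)" unfolding chordal_completion_def by auto
    then show "x \<in> XG V E" using cv_bv[of F V E] Ex_cv[of F V E] \<open>x = charvec F\<close> unfolding XG_def by simp
  qed
  have sumF: "chordal_completion V E F \<Longrightarrow> (\<Sum>f\<in>Ecomp V E. charvec F f) = int (card F)" for F
    using sum_cv[OF finE] unfolding chordal_completion_def by blast
  show "\<forall>x. (x \<in> feasible V E \<and>
                (\<forall>y\<in>feasible V E. (\<Sum>f\<in>Ecomp V E. x f) \<le> (\<Sum>f\<in>Ecomp V E. y f)))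
             \<longleftrightarrow> (\<exists>F. chordal_completion V E F \<and>
                     (\<forall>F'. chordal_completion V E F' \<longrightarrow> card F \<le> card F') \<and>
                     x = charvec F)"
  proof (intro allI iffI)
    fix x assume a: "x \<in> feasible V E \<and>
                (\<forall>y\<in>feasible V E. (\<Sum>f\<in>Ecomp V E. x f) \<le> (\<Sum>f\<in>Ecomp V E. y f))"
    then obtain F where F: "chordal_completion V E F" "x = charvec F" using feas XGcc by auto
    have "card F \<le> card F'" if "chordal_completion V E F'" for F'
    proof -
      have "charvec F' \<in> feasible V E" using feas XGcc that by auto
      then have "(\<Sum>f\<in>Ecomp V E. x f) \<le> (\<Sum>f\<in>Ecomp V E. charvec F' f)" using a by blast
      then show ?thesis using sumF[OF that] sumF[OF F(1)] F(2) by simp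
    qed
    then show "\<exists>F. chordal_completion V E F \<and>
                     (\<forall>F'. chordal_completion V E F' \<longrightarrow> card F \<le> card F') \<and> x = charvec F"
      using F by blast
  next
    fix x assume "\<exists>F. chordal_completion V E F \<and>
                     (\<forall>F'. chordal_completion V E F' \<longrightarrow> card F \<le> card F') \<and> x = charvec F"
    then obtain F where F: "chordal_completion V E F" "\<forall>F'. chordal_completion V E F' \<longrightarrow> card F \<le> card F'" "x = charvec F"
      by blast
    have xf: "x \<in> feasible V E" using feas XGcc F by auto
    have "(\<Sum>f\<in>Ecomp V E. x f) \<le> (\<Sum>f\<in>Ecomp V E. y f)" if yf: "y \<in> feasible V E" for y
    proof -
      have "y \<in> XG V E" using yf feas by simp
      then obtain F' where F': "chordal_completion V E F'" "y = charvec F'" using XGcc by blast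
      show ?thesis using sumF[OF F'(1)] sumF[OF F(1)] F(2) F(3) F' by simp
    qed
    then show "x \<in> feasible V E \<and>
                (\<forall>y\<in>feasible V E. (\<Sum>f\<in>Ecomp V E. x f) \<le> (\<Sum>f\<in>Ecomp V E. y f))"
      using xf by blast
  qed
qed

end
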